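(* Let $\Gamma$ be a group, $S\subset\Gamma$ finite, $0<\delta\le\frac12$, and let $\rho:\Gamma\to U(n)$ be a unital map with $\|\rho(st)-\rho(s)\rho(t)\|<\delta$ for all $s,t\in S$. For $a,b\in S$ put $$\omega(a,b)=\frac{1}{2\pi i}\mathrm{Tr}\big(\log(\rho(a)\rho(b)\rho(ab)^{-1})\big).$$ If $a,b,c,ab,bc\in S$, then $\omega(a,b)+\omega(ab,c)=\omega(a,bc)+\omega(b,c)$.
   Context: $\log$ denotes the power series centered at $1$, $\log(u)=\sum_{k\ge1}(-1)^{k+1}(u-1)^k/k$, which converges for $\|u-1\|<1$; $\mathrm{Tr}$ is the (unnormalized) matrix trace. *)

theory Defs
  imports "HOL-Analysis.Analysis" "HOL-Algebra.Group"
begin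

definition cadj :: "complex^'n^'n \<Rightarrow> complex^'n^'n" where
  "cadj A = (\<chi> i j. cnj (A $ j $ i))"

definition unitary_mat :: "complex^'n^'n \<Rightarrow> bool" where
  "unitary_mat A \<longleftrightarrow> A ** cadj A = mat 1 \<and> cadj A ** A = mat 1"

definition opnorm :: "complex^'n^'n \<Rightarrow> real" where
  "opnorm A = onorm (\<lambda>x. A *v x)"

fun mpow :: "complex^'n^'n \<Rightarrow> nat \<Rightarrow> complex^'n^'n" where
  "mpow A 0 = mat 1"
| "mpow A (Suc k) = A ** mpow A k"

definition mlog :: "complex^'n^'n \<Rightarrow> complex^'n^'n" where
  "mlog u = (\<Sum>k. scaleR ((-1) ^ k / real (Suc k)) (mpow (u - mat 1) (Suc k)))"

definition omega :: "('a, 'b) monoid_scheme \<Rightarrow> ('a \<Rightarrow> complex^'n^'n) \<Rightarrow> 'a \<Rightarrow> 'a \<Rightarrow> complex" where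
  "omega G \<rho> a b =
     trace (mlog (\<rho> a ** \<rho> b ** matrix_inv (\<rho> (a \<otimes>\<^bsub>G\<^esub> b)))) / (2 * complex_of_real pi * \<i>)"

end

theory Submission
  imports Defs
begin



lemma mm_radd: "((A::complex^'n^'n) + B) ** C = A ** C + B ** C"
  by (simp add: matrix_matrix_mult_def vec_eq_iff sum.distrib distrib_right)
lemma mm_rsub: "((A::complex^'n^'n) - B) ** C = A ** C - B ** C"
  by (simp add: matrix_matrix_mult_def vec_eq_iff sum_subtractf left_diff_distrib)
lemma mm_lsub: "(A::complex^'n^'n) ** (B - C) = A ** B - A ** C"
  by (simp add: matrix_matrix_mult_def vec_eq_iff sum_subtractf right_diff_distrib)
lemma mm_rscale: "(k *\<^sub>R (A::complex^'n^'n)) ** B = k *\<^sub>R (A ** B)"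
  by (simp add: matrix_matrix_mult_def vec_eq_iff scaleR_sum_right)
lemma mm_lscale: "(A::complex^'n^'n) ** (k *\<^sub>R B) = k *\<^sub>R (A ** B)"
  by (simp add: matrix_matrix_mult_def vec_eq_iff scaleR_sum_right)

lemma bilinear_mmult: "bilinear ((**) :: complex^'n^'n \<Rightarrow> complex^'n^'n \<Rightarrow> complex^'n^'n)"
  unfolding bilinear_def
  by (auto intro!: linearI simp: matrix_add_ldistrib mm_radd mm_lscale mm_rscale)

lemma bb_mmult: "bounded_bilinear ((**) :: complex^'n^'n \<Rightarrow> complex^'n^'n \<Rightarrow> complex^'n^'n)"
  using bilinear_mmult bilinear_conv_bounded_bilinear by blast

lemma bl_mv: "bounded_linear (\<lambda>x. (A::complex^'n^'n) *v x)"
  by simp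

lemma opnorm_mult: "opnorm (A ** B) \<le> opnorm A * opnorm (B::complex^'n^'n)"
proof -
  have "(\<lambda>x. (A ** B) *v x) = (\<lambda>x. A *v x) o (\<lambda>x. B *v x)"
    by (auto simp: matrix_vector_mul_assoc)
  then show ?thesis unfolding opnorm_def using onorm_compose[OF bl_mv bl_mv] by simp
qed

lemma opnorm_add: "opnorm (A + B) \<le> opnorm A + opnorm (B::complex^'n^'n)"
proof -
  have "(*v) (A + B) = (\<lambda>x. A *v x + B *v x)" by (auto simp: matrix_vector_mult_add_rdistrib)
  then show ?thesis unfolding opnorm_def using onorm_triangle[OF bl_mv bl_mv] by simp
qed

lemma opnorm_neg: "opnorm (- A) = opnorm (A::complex^'n^'n)"
proof -
  have "(*v) (- A) = (\<lambda>x. - (A *v x))" by (auto simp: matrix_vector_mult_def vec_eq_iff sum_negf)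
  then show ?thesis unfolding opnorm_def using onorm_neg[of "\<lambda>x. A *v x"] by simp
qed

lemma opnorm_diff: "opnorm (A - B) = opnorm (B - A::complex^'n^'n)"
  by (metis minus_diff_eq opnorm_neg)

lemma opnorm_scaleR: "opnorm (c *\<^sub>R A) = \<bar>c\<bar> * opnorm (A::complex^'n^'n)"
proof -
  have "(\<lambda>x. (c *\<^sub>R A) *v x) = (\<lambda>x. c *\<^sub>R (A *v x))"
    by (auto simp: matrix_vector_mult_def vec_eq_iff scaleR_sum_right)
  then show ?thesis unfolding opnorm_def using onorm_scaleR[OF bl_mv] by simp
qed

lemma opnorm_ge0: "0 \<le> opnorm (A::complex^'n^'n)"
  unfolding opnorm_def by (rule onorm_pos_le[OF bl_mv])

lemma opnorm_1: "opnorm (mat 1::complex^'n^'n) \<le> 1"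
proof -
  have "(*v) (mat 1::complex^'n^'n) = (\<lambda>x. x)" by auto
  then show ?thesis unfolding opnorm_def using onorm_id_le by simp
qed

lemma opnorm_0: "opnorm (0::complex^'n^'n) = 0"
proof -
  have "(*v) (0::complex^'n^'n) = (\<lambda>x. 0)" by auto
  then show ?thesis unfolding opnorm_def using onorm_zero by simp
qed

lemma opnorm_apply: "norm (A *v x) \<le> opnorm A * norm (x::complex^'n)"
  unfolding opnorm_def by (rule onorm[OF bl_mv])

lemma entry_le: "norm (((A::complex^'n^'n) $ i) $ j) \<le> opnorm A"
proof -
  have "(A *v axis j 1) $ i = A $ i $ j"
    by (simp add: matrix_vector_mult_def axis_def if_distrib cong: if_cong)
  moreover have "norm ((A *v axis j 1) $ i) \<le> norm (A *v axis j 1)" by (rule Finite_Cartesian_Product.norm_nth_le)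
  ultimately have "norm (A $ i $ j) \<le> norm (A *v axis j 1)" by simp
  also have "\<dots> \<le> opnorm A * norm (axis j (1::complex))" by (rule opnorm_apply)
  also have "\<dots> = opnorm A" by (simp add: inner_axis' norm_eq_1)
  finally show ?thesis .
qed

lemma norm_le_sum_cart: "norm (x::'a::real_normed_vector^'n) \<le> (\<Sum>i\<in>UNIV. norm (x$i))"
  by (simp add: norm_vec_def L2_set_le_sum)

lemma frob_le: "norm (A::complex^'n^'n) \<le> real (CARD('n))^2 * opnorm A"
proof -
  have "norm A \<le> (\<Sum>i\<in>UNIV. norm (A$i))" by (rule norm_le_sum_cart)
  also have "\<dots> \<le> (\<Sum>i\<in>(UNIV::'n set). \<Sum>j\<in>(UNIV::'n set). norm (A$i$j))"
    by (intro sum_mono norm_le_sum_cart)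
  also have "\<dots> \<le> (\<Sum>i\<in>(UNIV::'n set). \<Sum>j\<in>(UNIV::'n set). opnorm A)"
    by (intro sum_mono entry_le)
  also have "\<dots> = real (CARD('n))^2 * opnorm A" by (simp add: power2_eq_square)
  finally show ?thesis .
qed

lemma trace_le: "norm (trace (A::complex^'n^'n)) \<le> real (CARD('n)) * opnorm A"
proof -
  have "norm (trace A) \<le> (\<Sum>i\<in>UNIV. norm (A$i$i))" unfolding trace_def by (rule norm_sum)
  also have "\<dots> \<le> (\<Sum>i\<in>(UNIV::'n set). opnorm A)" by (intro sum_mono entry_le)
  finally show ?thesis by simp
qed

lemma bl_trace: "bounded_linear (trace :: complex^'n^'n \<Rightarrow> complex)"
proof -
  have "bounded_linear (\<lambda>A::complex^'n^'n. \<Sum>i\<in>UNIV. A$i$i)"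
    by (intro bounded_linear_sum bounded_linear_compose[OF bounded_linear_vec_nth bounded_linear_vec_nth])
  then show ?thesis unfolding trace_def[abs_def] .
qed

lemma trace_scaleR: "trace (c *\<^sub>R (A::complex^'n^'n)) = c *\<^sub>R trace A"
  by (simp add: trace_def scaleR_sum_right)



lemma cadj_mult: "cadj ((A::complex^'n^'n) ** B) = cadj B ** cadj A"
  by (simp add: cadj_def matrix_matrix_mult_def vec_eq_iff mult.commute)

lemma cadj_cadj: "cadj (cadj (A::complex^'n^'n)) = A"
  by (simp add: cadj_def vec_eq_iff)

lemma unitary_cadj: "unitary_mat (A::complex^'n^'n) \<Longrightarrow> unitary_mat (cadj A)"
  by (simp add: unitary_mat_def cadj_cadj)

lemma unitary_mult: "unitary_mat (A::complex^'n^'n) \<Longrightarrow> unitary_mat B \<Longrightarrow> unitary_mat (A ** B)"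
  unfolding unitary_mat_def cadj_mult
  by (metis matrix_mul_assoc matrix_mul_lid)

lemma norm_sq_vec: "(norm (x::complex^'n))^2 = (\<Sum>i\<in>UNIV. (cmod (x$i))^2)"
  by (simp add: norm_vec_def L2_set_def sum_nonneg)

lemma csq: "(complex_of_real (cmod z))^2 = z * cnj z"
  by (metis complex_norm_square of_real_power)

lemma unitary_iso:
  assumes "cadj U ** U = mat 1"
  shows "norm ((U::complex^'n^'n) *v x) = norm x"
proof -
  have e: "(\<Sum>i\<in>UNIV. cnj (U$i$k) * U$i$j) = (if k = j then 1 else 0)" for k j
  proof -
    have "(cadj U ** U) $ k $ j = (if k = j then 1 else 0)" using assms by (simp add: mat_def)
    then show ?thesis by (simp add: matrix_matrix_mult_def cadj_def)
  qed
  have "complex_of_real ((norm (U *v x))^2) = (\<Sum>i\<in>UNIV. (U *v x)$i * cnj ((U *v x)$i))"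
    unfolding norm_sq_vec by (simp add: csq)
  also have "\<dots> = (\<Sum>i\<in>UNIV. (\<Sum>j\<in>UNIV. U$i$j * x$j) * (\<Sum>k\<in>UNIV. cnj (U$i$k) * cnj (x$k)))"
    by (simp add: matrix_vector_mult_def)
  also have "\<dots> = (\<Sum>i\<in>UNIV. \<Sum>j\<in>UNIV. \<Sum>k\<in>UNIV. (x$j * cnj (x$k)) * (cnj (U$i$k) * U$i$j))"
    unfolding sum_product by (intro sum.cong refl) (simp add: mult_ac)
  also have "\<dots> = (\<Sum>j\<in>UNIV. \<Sum>i\<in>UNIV. \<Sum>k\<in>UNIV. (x$j * cnj (x$k)) * (cnj (U$i$k) * U$i$j))"
    by (rule sum.swap)
  also have "\<dots> = (\<Sum>j\<in>UNIV. \<Sum>k\<in>UNIV. \<Sum>i\<in>UNIV. (x$j * cnj (x$k)) * (cnj (U$i$k) * U$i$j))"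
    by (rule sum.cong[OF refl], rule sum.swap)
  also have "\<dots> = (\<Sum>j\<in>UNIV. \<Sum>k\<in>UNIV. (x$j * cnj (x$k)) * (if k = j then 1 else 0))"
    by (simp add: sum_distrib_left[symmetric] e)
  also have "\<dots> = (\<Sum>j\<in>UNIV. x$j * cnj (x$j))"
    by (simp add: if_distrib cong: if_cong)
  also have "\<dots> = complex_of_real ((norm x)^2)"
    unfolding norm_sq_vec by (simp add: csq)
  finally have "(norm (U *v x))^2 = (norm x)^2" using of_real_eq_iff by blast
  then show ?thesis by (simp add: power2_eq_iff_nonneg)
qed

lemma opnorm_unitary: "unitary_mat (U::complex^'n^'n) \<Longrightarrow> opnorm U \<le> 1"
  unfolding opnorm_def unitary_mat_def
  by (rule onorm_le) (simp add: unitary_iso)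

lemma matrix_inv_eq:
  assumes "(A::complex^'n^'n) ** B = mat 1" "B ** A = mat 1"
  shows "matrix_inv A = B"
proof -
  have "\<exists>A'. A ** A' = mat 1 \<and> A' ** A = mat 1" using assms by blast
  then have s: "A ** matrix_inv A = mat 1 \<and> matrix_inv A ** A = mat 1"
    unfolding matrix_inv_def by (rule someI_ex)
  have "matrix_inv A = (matrix_inv A ** A) ** B" using assms(1) by (simp add: matrix_mul_assoc[symmetric])
  then show ?thesis using s by simp
qed

lemma mpow_add: "mpow (A::complex^'n^'n) (m + k) = mpow A m ** mpow A k"
  by (induction m) (simp_all add: matrix_mul_assoc)

lemma mpow_Suc': "mpow (A::complex^'n^'n) (Suc m) = mpow A m ** A"
  using mpow_add[of A m 1] by simp

lemma mpow_conj:
  assumes "(P::complex^'n^'n) ** Q = mat 1" "Q ** P = mat 1"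
  shows "mpow (P ** B ** Q) m = P ** mpow B m ** Q"
proof (induction m)
  case 0 then show ?case using assms by simp
next
  case (Suc m)
  have "mpow (P ** B ** Q) (Suc m) = P ** B ** (Q ** P) ** mpow B m ** Q"
    using Suc by (simp add: matrix_mul_assoc)
  also have "\<dots> = P ** mpow B (Suc m) ** Q" using assms by (simp add: matrix_mul_assoc)
  finally show ?case .
qed

lemma trace_mpow_conj:
  assumes "(P::complex^'n^'n) ** Q = mat 1" "Q ** P = mat 1"
  shows "trace (mpow (P ** B ** Q) m) = trace (mpow B m)"
proof -
  have "trace (P ** mpow B m ** Q) = trace (Q ** (P ** mpow B m))"
    by (rule trace_mul_sym)
  also have "\<dots> = trace (mpow B m)" using assms(2) by (simp add: matrix_mul_assoc)
  finally show ?thesis using mpow_conj[OF assms] by simp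
qed

lemma opnorm_mpow: "opnorm (mpow (A::complex^'n^'n) m) \<le> opnorm A ^ m"
proof (induction m)
  case 0 then show ?case using opnorm_1 by simp
next
  case (Suc m)
  have "opnorm (mpow A (Suc m)) \<le> opnorm A * opnorm (mpow A m)" by (simp add: opnorm_mult)
  also have "\<dots> \<le> opnorm A * opnorm A ^ m" by (intro mult_left_mono Suc opnorm_ge0)
  finally show ?case by simp
qed

lemma mpow_zero: "mpow (0::complex^'n^'n) (Suc k) = 0"
  by (simp add: matrix_matrix_mult_def vec_eq_iff)



definition lt :: "complex^'n^'n \<Rightarrow> nat \<Rightarrow> complex" where
  "lt B k = complex_of_real ((-1) ^ k / real (Suc k)) * trace (mpow B (Suc k))"

definition Lv :: "complex^'n^'n \<Rightarrow> complex" where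
  "Lv B = suminf (lt B)"

definition nm :: "complex^'n^'n \<Rightarrow> complex^'n^'n" where
  "nm B = (\<Sum>k. ((-1) ^ k :: real) *\<^sub>R mpow B k)"

lemma mpow_bound: "norm (mpow (B::complex^'n^'n) k) \<le> real (CARD('n))^2 * opnorm B ^ k"
  using frob_le[of "mpow B k"] opnorm_mpow[of B k]
  by (meson mult_left_mono of_nat_0_le_iff order_trans zero_le_power)

lemma geo_summable: "0 \<le> r \<Longrightarrow> r < (1::real) \<Longrightarrow> summable (\<lambda>k. C * r ^ k)"
  by (intro summable_mult summable_geometric) simp

lemma lt_sums:
  assumes "opnorm (B::complex^'n^'n) < 1"
  shows "lt B sums trace (mlog (mat 1 + B))"
proof -
  let ?C = "real (CARD('n))^2"
  let ?f = "\<lambda>k. ((-1) ^ k / real (Suc k)) *\<^sub>R mpow B (Suc k)"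
  have r0: "0 \<le> opnorm B" by (rule opnorm_ge0)
  have "summable ?f"
  proof (rule summable_comparison_test')
    show "summable (\<lambda>k. ?C * opnorm B ^ k)" using geo_summable r0 assms by blast
    fix k :: nat
    have "norm (?f k) = (1 / real (Suc k)) * norm (mpow B (Suc k))"
      by (simp add: abs_mult)
    also have "\<dots> \<le> 1 * norm (mpow B (Suc k))"
      by (intro mult_right_mono) auto
    also have "\<dots> \<le> ?C * opnorm B ^ Suc k" using mpow_bound[of B "Suc k"] by (simp del: mpow.simps)
    also have "\<dots> \<le> ?C * opnorm B ^ k"
      using r0 assms by (intro mult_left_mono power_decreasing) auto
    finally show "norm (?f k) \<le> ?C * opnorm B ^ k" .
  qed
  then have "?f sums mlog (mat 1 + B)" unfolding mlog_def by (simp add: summable_sums)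
  from bounded_linear.sums[OF bl_trace this]
  have "(\<lambda>k. ((-1) ^ k / real (Suc k)) *\<^sub>R trace (mpow B (Suc k))) sums trace (mlog (mat 1 + B))"
    by (simp only: trace_scaleR)
  then show ?thesis unfolding lt_def[abs_def] by (simp only: scaleR_conv_of_real)
qed

lemma Lv_eq: "opnorm (B::complex^'n^'n) < 1 \<Longrightarrow> Lv B = trace (mlog (mat 1 + B))"
  unfolding Lv_def using lt_sums sums_unique by metis

lemma Lv_zero: "Lv (0::complex^'n^'n) = 0"
  unfolding Lv_def lt_def by (simp add: mpow_zero trace_def)

lemma nm_sums:
  assumes "opnorm (B::complex^'n^'n) < 1"
  shows "(\<lambda>k. ((-1) ^ k :: real) *\<^sub>R mpow B k) sums nm B"
    and "(\<lambda>k. ((-1) ^ k :: real) *\<^sub>R mpow B k) \<longlonglongrightarrow> 0"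
proof -
  let ?C = "real (CARD('n))^2"
  have r0: "0 \<le> opnorm B" by (rule opnorm_ge0)
  have b: "norm (((-1) ^ k :: real) *\<^sub>R mpow B k) \<le> ?C * opnorm B ^ k" for k
    using mpow_bound[of B k] by simp
  have "summable (\<lambda>k. ((-1) ^ k :: real) *\<^sub>R mpow B k)"
    by (rule summable_comparison_test'[OF geo_summable[OF r0 assms]]) (rule b)
  then show "(\<lambda>k. ((-1) ^ k :: real) *\<^sub>R mpow B k) sums nm B"
    unfolding nm_def by (simp add: summable_sums)
  have "(\<lambda>k. ?C * opnorm B ^ k) \<longlonglongrightarrow> 0"
    using r0 assms by (intro tendsto_mult_right_zero LIMSEQ_power_zero) auto
  then show "(\<lambda>k. ((-1) ^ k :: real) *\<^sub>R mpow B k) \<longlonglongrightarrow> 0"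
    by (rule Lim_null_comparison[rotated]) (rule always_eventually, rule allI, rule b)
qed

lemma mm_left_bl: "bounded_linear (\<lambda>M::complex^'n^'n. (A::complex^'n^'n) ** M)"
  proof -
  have "linear (\<lambda>M::complex^'n^'n. (A::complex^'n^'n) ** M)"
    by (auto intro!: linearI simp: matrix_add_ldistrib mm_lscale)
  then show ?thesis using linear_conv_bounded_linear by blast
qed

lemma mm_right_bl: "bounded_linear (\<lambda>M::complex^'n^'n. M ** (A::complex^'n^'n))"
  proof -
  have "linear (\<lambda>M::complex^'n^'n. M ** (A::complex^'n^'n))"
    by (auto intro!: linearI simp: mm_radd mm_rscale)
  then show ?thesis using linear_conv_bounded_linear by blast
qed

lemma mpow_comm: "mpow B k ** B = B ** mpow (B::complex^'n^'n) k"
  by (metis mpow.simps(2) mpow_Suc')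

lemma nm_inv:
  assumes "opnorm (B::complex^'n^'n) < 1"
  shows "(mat 1 + B) ** nm B = mat 1" "nm B ** (mat 1 + B) = mat 1"
proof -
  let ?g = "\<lambda>k. ((-1) ^ k :: real) *\<^sub>R mpow B k"
  have tel: "(\<lambda>n. ?g n - ?g (Suc n)) sums (?g 0 - 0)"
    by (rule telescope_sums'[OF nm_sums(2)[OF assms]])
  have e1: "(mat 1 + B) ** ?g k = ?g k - ?g (Suc k)" for k
    by (simp add: mm_radd matrix_add_ldistrib mm_lscale scaleR_add_right)
  have e2: "?g k ** (mat 1 + B) = ?g k - ?g (Suc k)" for k
    by (simp add: mm_rscale matrix_add_ldistrib mpow_comm scaleR_add_right)
  have "(\<lambda>k. (mat 1 + B) ** ?g k) sums ((mat 1 + B) ** nm B)"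
    by (rule bounded_linear.sums[OF mm_left_bl nm_sums(1)[OF assms]])
  then have "(\<lambda>k. ?g k - ?g (Suc k)) sums ((mat 1 + B) ** nm B)" by (simp only: e1)
  from sums_unique2[OF this tel] show "(mat 1 + B) ** nm B = mat 1" by simp
  have "(\<lambda>k. ?g k ** (mat 1 + B)) sums (nm B ** (mat 1 + B))"
    by (rule bounded_linear.sums[OF mm_right_bl nm_sums(1)[OF assms]])
  then have "(\<lambda>k. ?g k - ?g (Suc k)) sums (nm B ** (mat 1 + B))" by (simp only: e2)
  from sums_unique2[OF this tel] show "nm B ** (mat 1 + B) = mat 1" by simp
qed

lemma trace_nm_sums:
  assumes "opnorm (B::complex^'n^'n) < 1"
  shows "(\<lambda>k. ((-1) ^ k :: real) *\<^sub>R trace (mpow B k ** D)) sums trace (nm B ** (D::complex^'n^'n))"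
proof -
  have bl: "bounded_linear (\<lambda>M::complex^'n^'n. trace (M ** D))"
    by (rule bounded_linear_compose[OF bl_trace mm_right_bl])
  from bounded_linear.sums[OF bl nm_sums(1)[OF assms]]
  show ?thesis by (simp add: mm_rscale trace_scaleR)
qed



definition Pd :: "complex^'n^'n \<Rightarrow> complex^'n^'n \<Rightarrow> nat \<Rightarrow> complex^'n^'n" where
  "Pd B D m = (\<Sum>j<m. mpow B j ** D ** mpow B (m - Suc j))"

lemma mm_zero_r: "(A::complex^'n^'n) ** 0 = 0"
  by (simp add: matrix_matrix_mult_def vec_eq_iff)

lemma trace_zero: "trace (0::complex^'n^'n) = 0"
  by (simp add: trace_def)

lemma mm_sum_left: "finite S \<Longrightarrow> (A::complex^'n^'n) ** sum f S = (\<Sum>i\<in>S. A ** f i)"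
  by (induction S rule: finite_induct) (simp_all add: matrix_add_ldistrib mm_zero_r)

lemma trace_sum: "finite S \<Longrightarrow> trace (sum (f::_ \<Rightarrow> complex^'n^'n) S) = (\<Sum>i\<in>S. trace (f i))"
  by (induction S rule: finite_induct) (simp_all add: trace_add trace_zero)

lemma Pd_Suc: "Pd B D (Suc m) = D ** mpow B m + B ** Pd B D m"
proof -
  have "Pd B D (Suc m) = mpow B 0 ** D ** mpow B m + (\<Sum>j<m. mpow B (Suc j) ** D ** mpow B (m - Suc j))"
    unfolding Pd_def by (subst sum.lessThan_Suc_shift) simp
  also have "(\<Sum>j<m. mpow B (Suc j) ** D ** mpow B (m - Suc j)) = B ** Pd B D m"
    unfolding Pd_def by (simp add: mm_sum_left matrix_mul_assoc)
  finally show ?thesis by simp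
qed

lemma trace_Pd: "trace (Pd B D m) = of_nat m * trace (mpow B (m - 1) ** D)"
proof -
  have "trace (mpow B j ** D ** mpow B (m - Suc j)) = trace (mpow B (m - 1) ** D)" if "j < m" for j
  proof -
    have "trace ((mpow B j ** D) ** mpow B (m - Suc j)) = trace (mpow B (m - Suc j) ** (mpow B j ** D))"
      by (rule trace_mul_sym)
    also have "\<dots> = trace (mpow B (m - Suc j + j) ** D)" by (simp add: mpow_add matrix_mul_assoc)
    also have "m - Suc j + j = m - 1" using that by simp
    finally show ?thesis .
  qed
  then have "trace (Pd B D m) = (\<Sum>j<m. trace (mpow B (m - 1) ** D))"
    unfolding Pd_def by (simp add: trace_sum)
  then show ?thesis by simp
qed

lemma deriv_mpow:
  "((\<lambda>t::real. mpow (B0 + t *\<^sub>R D) m) has_derivative (\<lambda>h. h *\<^sub>R Pd (B0 + t *\<^sub>R D) D m)) (at t within S)"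
proof (induction m)
  case 0
  show ?case using has_derivative_const[of "mat 1" "at t within S"] by (simp add: Pd_def)
next
  case (Suc m)
  have lin: "((\<lambda>t::real. B0 + t *\<^sub>R D) has_derivative (\<lambda>h. h *\<^sub>R D)) (at t within S)"
    by (auto intro!: derivative_eq_intros)
  show ?case unfolding mpow.simps
    by (rule has_derivative_eq_rhs[OF bounded_bilinear.FDERIV[OF bb_mmult lin Suc]])
      (auto simp: Pd_Suc mm_lscale mm_rscale scaleR_add_right)
qed

lemma deriv_term:
  "((\<lambda>t::real. lt (B0 + t *\<^sub>R D) k) has_derivative
     (\<lambda>h. h *\<^sub>R (((-1) ^ k :: real) *\<^sub>R trace (mpow (B0 + t *\<^sub>R D) k ** D)))) (at t within S)"
proof -
  have "((\<lambda>t::real. trace (mpow (B0 + t *\<^sub>R D) (Suc k))) has_derivative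
     (\<lambda>h. trace (h *\<^sub>R Pd (B0 + t *\<^sub>R D) D (Suc k)))) (at t within S)"
    by (rule bounded_linear.has_derivative[OF bl_trace deriv_mpow])
  then have "((\<lambda>t::real. complex_of_real ((-1) ^ k / real (Suc k)) * trace (mpow (B0 + t *\<^sub>R D) (Suc k))) has_derivative
     (\<lambda>h. complex_of_real ((-1) ^ k / real (Suc k)) * trace (h *\<^sub>R Pd (B0 + t *\<^sub>R D) D (Suc k)))) (at t within S)"
    by (rule has_derivative_mult_right)
  then show ?thesis unfolding lt_def
  proof (rule has_derivative_eq_rhs)
    show "(\<lambda>h. complex_of_real ((-1) ^ k / real (Suc k)) * trace (h *\<^sub>R Pd (B0 + t *\<^sub>R D) D (Suc k))) =
      (\<lambda>h. h *\<^sub>R (((-1) ^ k :: real) *\<^sub>R trace (mpow (B0 + t *\<^sub>R D) k ** D)))"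
      apply (rule ext)
      apply (simp only: trace_scaleR trace_Pd diff_Suc_1)
      apply (simp add: scaleR_conv_of_real field_simps del: of_nat_Suc)
      done
  qed
qed



lemma L_deriv:
  fixes B0 D :: "complex^'n^'n"
  assumes r: "r < 1" and bd: "\<And>t. t \<in> {0..1} \<Longrightarrow> opnorm (B0 + t *\<^sub>R D) \<le> r"
    and t: "t \<in> {0..1::real}"
  shows "((\<lambda>t. Lv (B0 + t *\<^sub>R D)) has_derivative (\<lambda>h. h *\<^sub>R trace (nm (B0 + t *\<^sub>R D) ** D)))
           (at t within {0..1})"
proof -
  let ?S = "{0..1::real}"
  let ?B = "\<lambda>t. B0 + t *\<^sub>R D"
  let ?C = "real (CARD('n))"
  define d where "d k t = ((-1) ^ k :: real) *\<^sub>R trace (mpow (?B t) k ** D)" for k t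
  have r0: "0 \<le> r" using bd[of 0] opnorm_ge0[of B0] by simp
  have lt1: "opnorm (?B t) < 1" if "t \<in> ?S" for t using bd[OF that] r by simp
  have unif: "uniform_limit ?S (\<lambda>n t. \<Sum>i<n. d i t) (\<lambda>t. \<Sum>i. d i t) sequentially"
  proof (rule Weierstrass_m_test)
    show "summable (\<lambda>k. ?C * (r ^ k * opnorm D))"
      by (rule summable_mult[OF summable_mult2[OF summable_geometric]]) (use r0 r in simp)
    fix k t assume "t \<in> ?S"
    have "norm (d k t) = norm (trace (mpow (?B t) k ** D))" by (simp add: d_def)
    also have "\<dots> \<le> ?C * opnorm (mpow (?B t) k ** D)" by (rule trace_le)
    also have "\<dots> \<le> ?C * (opnorm (mpow (?B t) k) * opnorm D)"
      by (rule mult_left_mono[OF opnorm_mult]) simp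
    also have "\<dots> \<le> ?C * (r ^ k * opnorm D)"
    proof -
      have p: "opnorm (mpow (?B t) k) \<le> r ^ k"
        by (rule order_trans[OF opnorm_mpow power_mono[OF bd[OF \<open>t \<in> ?S\<close>] opnorm_ge0]])
      show ?thesis by (rule mult_left_mono[OF mult_right_mono[OF p opnorm_ge0]]) simp
    qed
    finally show "norm (d k t) \<le> ?C * (r ^ k * opnorm D)" .
  qed
  have G: "(\<Sum>i. d i t) = trace (nm (?B t) ** D)" if "t \<in> ?S" for t
    unfolding d_def by (rule sums_unique[OF trace_nm_sums[OF lt1[OF that]], symmetric])
  have "\<exists>g. \<forall>x\<in>?S. (\<lambda>n. lt (?B x) n) sums (g x) \<and>
      (g has_derivative (\<lambda>h. h *\<^sub>R trace (nm (?B x) ** D))) (at x within ?S)"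
  proof (rule has_derivative_series[where f' = "\<lambda>k t h. h *\<^sub>R d k t"])
    show "convex ?S" by simp
    show "\<And>n x. x \<in> ?S \<Longrightarrow> ((\<lambda>t. lt (?B t) n) has_derivative (\<lambda>h. h *\<^sub>R d n x)) (at x within ?S)"
      unfolding d_def by (rule deriv_term)
    show "(0::real) \<in> ?S" by simp
    show "(\<lambda>n. lt (?B 0) n) sums Lv (?B 0)"
      unfolding Lv_def using lt_sums[OF lt1[of 0]] by (simp add: sums_iff)
    fix e :: real assume "e > 0"
    from uniform_limitD[OF unif this]
    show "\<forall>\<^sub>F n in sequentially. \<forall>x\<in>?S. \<forall>h. norm ((\<Sum>i<n. h *\<^sub>R d i x) - h *\<^sub>R trace (nm (?B x) ** D)) \<le> e * norm h"
    proof (rule eventually_mono)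
      fix n assume H: "\<forall>x\<in>?S. dist (\<Sum>i<n. d i x) (\<Sum>i. d i x) < e"
      show "\<forall>x\<in>?S. \<forall>h. norm ((\<Sum>i<n. h *\<^sub>R d i x) - h *\<^sub>R trace (nm (?B x) ** D)) \<le> e * norm h"
      proof (intro ballI allI)
        fix x h assume x: "x \<in> ?S"
        have "norm ((\<Sum>i<n. h *\<^sub>R d i x) - h *\<^sub>R trace (nm (?B x) ** D))
            = \<bar>h\<bar> * norm ((\<Sum>i<n. d i x) - (\<Sum>i. d i x))"
          by (simp add: G[OF x] scaleR_sum_right[symmetric] scaleR_diff_right[symmetric])
        also have "\<dots> \<le> \<bar>h\<bar> * e"
        proof (rule mult_left_mono)
          have "dist (\<Sum>i<n. d i x) (\<Sum>i. d i x) < e" using H x by blast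
          then show "norm ((\<Sum>i<n. d i x) - (\<Sum>i. d i x)) \<le> e" by (simp add: dist_norm)
        qed simp
        finally show "norm ((\<Sum>i<n. h *\<^sub>R d i x) - h *\<^sub>R trace (nm (?B x) ** D)) \<le> e * norm h"
          by (simp add: mult_ac)
      qed
    qed
  qed
  then obtain g where g: "\<And>x. x \<in> ?S \<Longrightarrow> (\<lambda>n. lt (?B x) n) sums (g x)"
    "\<And>x. x \<in> ?S \<Longrightarrow> (g has_derivative (\<lambda>h. h *\<^sub>R trace (nm (?B x) ** D))) (at x within ?S)"
    by blast
  have "g x = Lv (?B x)" if "x \<in> ?S" for x
    unfolding Lv_def by (rule sums_unique[OF g(1)[OF that]])
  then show ?thesis
    by (intro has_derivative_transform[OF t _ g(2)[OF t]]) simp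
qed

lemma trlog_mult:
  fixes X Y y z :: "complex^'n^'n"
  assumes n: "opnorm X + opnorm Y < 1" and ny: "opnorm y \<le> 1"
    and y: "y = mat 1 + Y" and yz: "y ** z = mat 1"
  shows "Lv (Y + X ** y) = Lv X + Lv Y"
proof -
  let ?S = "{0..1::real}"
  let ?B1 = "\<lambda>t::real. Y + t *\<^sub>R (X ** y)"
  let ?B2 = "\<lambda>t::real. 0 + t *\<^sub>R X"
  have b1: "opnorm (?B1 t) \<le> opnorm X + opnorm Y" if "t \<in> ?S" for t
  proof -
    have "opnorm (?B1 t) \<le> opnorm Y + \<bar>t\<bar> * opnorm (X ** y)"
      using opnorm_add[of Y "t *\<^sub>R (X ** y)"] by (simp add: opnorm_scaleR)
    also have "\<bar>t\<bar> * opnorm (X ** y) \<le> opnorm (X ** y)"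
      by (rule mult_left_le_one_le[OF opnorm_ge0]) (use that in auto)
    also have "opnorm (X ** y) \<le> opnorm X * opnorm y" by (rule opnorm_mult)
    also have "\<dots> \<le> opnorm X * 1" by (rule mult_left_mono[OF ny opnorm_ge0])
    finally show ?thesis by simp
  qed
  have b2: "opnorm (?B2 t) \<le> opnorm X" if "t \<in> ?S" for t
  proof -
    have "\<bar>t\<bar> * opnorm X \<le> opnorm X"
      by (rule mult_left_le_one_le[OF opnorm_ge0]) (use that in auto)
    then show ?thesis by (simp add: opnorm_scaleR)
  qed
  have nY: "opnorm X < 1" using n opnorm_ge0[of Y] by simp
  have G: "trace (nm (?B1 t) ** (X ** y)) = trace (nm (?B2 t) ** X)" if t: "t \<in> ?S" for t
  proof -
    let ?R1 = "nm (?B1 t)" and ?R2 = "nm (?B2 t)" and ?x = "mat 1 + t *\<^sub>R X"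
    have i1: "?R1 ** (mat 1 + ?B1 t) = mat 1"
      by (rule nm_inv(2)) (use b1[OF t] n in simp)
    have i2: "(mat 1 + ?B2 t) ** ?R2 = mat 1"
      by (rule nm_inv(1)) (use b2[OF t] nY in simp)
    have f: "mat 1 + ?B1 t = ?x ** y"
      by (simp add: y mm_radd mm_rscale matrix_add_ldistrib scaleR_add_right)
    have "?R1 ** ?x = ?R1 ** ?x ** (y ** z)" by (simp add: yz)
    also have "\<dots> = (?R1 ** (?x ** y)) ** z" by (simp add: matrix_mul_assoc)
    also have "\<dots> = z" using i1 f by simp
    finally have h1: "?R1 ** ?x = z" .
    have "?R1 = ?R1 ** (?x ** ?R2)" using i2 by simp
    also have "\<dots> = z ** ?R2" using h1 by (simp add: matrix_mul_assoc)
    finally have h2: "?R1 = z ** ?R2" .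
    have "trace (?R1 ** (X ** y)) = trace ((z ** ?R2 ** X) ** y)" by (simp add: h2 matrix_mul_assoc)
    also have "\<dots> = trace (y ** (z ** ?R2 ** X))" by (rule trace_mul_sym)
    also have "\<dots> = trace (?R2 ** X)" by (simp add: matrix_mul_assoc yz)
    finally show ?thesis .
  qed
  define F where "F t = Lv (?B1 t) - Lv (?B2 t)" for t
  have dF: "(F has_derivative (\<lambda>h. 0)) (at t within ?S)" if t: "t \<in> ?S" for t
  proof -
    have d1: "((\<lambda>t. Lv (?B1 t)) has_derivative (\<lambda>h. h *\<^sub>R trace (nm (?B1 t) ** (X ** y)))) (at t within ?S)"
      by (rule L_deriv[OF n b1 t])
    have d2: "((\<lambda>t. Lv (?B2 t)) has_derivative (\<lambda>h. h *\<^sub>R trace (nm (?B2 t) ** X))) (at t within ?S)"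
      by (rule L_deriv[OF nY b2 t])
    show ?thesis unfolding F_def
      by (rule has_derivative_eq_rhs[OF has_derivative_diff[OF d1 d2]]) (simp add: G[OF t])
  qed
  have "F 1 = F 0"
    by (rule has_derivative_zero_unique[where s = ?S, OF _ dF]) auto
  then have "Lv (Y + X ** y) - Lv X = Lv Y" unfolding F_def by (simp add: Lv_zero)
  then have "Lv (Y + X ** y) = Lv Y + Lv X" by (simp only: diff_eq_eq)
  then show ?thesis by (simp only: add.commute)
qed



lemma near_unit:
  fixes W A :: "complex^'n^'n"
  assumes "unitary_mat W"
  shows "opnorm (A ** cadj W - mat 1) \<le> opnorm (W - A)"
proof -
  have WW: "W ** cadj W = mat 1" using assms unfolding unitary_mat_def by simp
  have "A ** cadj W - mat 1 = (A - W) ** cadj W" by (simp add: mm_rsub WW)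
  then have "opnorm (A ** cadj W - mat 1) \<le> opnorm (A - W) * opnorm (cadj W)"
    by (simp add: opnorm_mult)
  also have "\<dots> \<le> opnorm (A - W) * 1"
    by (intro mult_left_mono opnorm_unitary unitary_cadj assms opnorm_ge0)
  finally show ?thesis by (simp add: opnorm_diff)
qed

lemma Lv_conj:
  fixes P B :: "complex^'n^'n"
  assumes "P ** Q = mat 1" "Q ** P = mat 1"
  shows "Lv (P ** B ** Q) = Lv B"
  unfolding Lv_def lt_def by (simp only: trace_mpow_conj[OF assms])

lemma cancel_r: "cadj W ** W = mat 1 \<Longrightarrow> Q ** cadj W ** (W::complex^'n^'n) = Q"
  by (metis matrix_mul_assoc matrix_mul_rid)

theorem proposition2p6:
  fixes G :: "('a, 'b) monoid_scheme"
    and \<rho> :: "'a \<Rightarrow> complex^'n^'n"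
    and S :: "'a set"
    and \<delta> :: real
    and a b c :: 'a
  assumes "group G"
    and "\<forall>g\<in>carrier G. unitary_mat (\<rho> g)"
    and "\<rho> \<one>\<^bsub>G\<^esub> = mat 1"
    and "S \<subseteq> carrier G" and "finite S"
    and "0 < \<delta>" and "\<delta> \<le> 1/2"
    and "\<forall>s\<in>S. \<forall>t\<in>S. opnorm (\<rho> (s \<otimes>\<^bsub>G\<^esub> t) - \<rho> s ** \<rho> t) < \<delta>"
    and "a \<in> S" and "b \<in> S" and "c \<in> S"
    and "a \<otimes>\<^bsub>G\<^esub> b \<in> S" and "b \<otimes>\<^bsub>G\<^esub> c \<in> S"
  shows "omega G \<rho> a b + omega G \<rho> (a \<otimes>\<^bsub>G\<^esub> b) c
       = omega G \<rho> a (b \<otimes>\<^bsub>G\<^esub> c) + omega G \<rho> b c"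
proof -
  interpret group G by fact
  note un = assms(2)
  have SC: "x \<in> S \<Longrightarrow> x \<in> carrier G" for x using assms(4) by blast
  define U where "U s t = \<rho> s ** \<rho> t ** cadj (\<rho> (s \<otimes>\<^bsub>G\<^esub> t))" for s t
  define k where "k = 2 * complex_of_real pi * \<i>"
  have Ud: "opnorm (U s t - mat 1) < \<delta>" if "s \<in> S" "t \<in> S" for s t
  proof -
    have u: "unitary_mat (\<rho> (s \<otimes>\<^bsub>G\<^esub> t))" using un SC that by simp
    have l: "opnorm (\<rho> (s \<otimes>\<^bsub>G\<^esub> t) - \<rho> s ** \<rho> t) < \<delta>" using assms(8) that by blast
    show ?thesis unfolding U_def by (rule order.strict_trans1[OF near_unit[OF u] l])
  qed
  have Uu: "unitary_mat (U s t)" if "s \<in> carrier G" "t \<in> carrier G" for s t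
    unfolding U_def using un that by (intro unitary_mult unitary_cadj) auto
  have om: "omega G \<rho> s t = Lv (U s t - mat 1) / k" if "s \<in> S" "t \<in> S" for s t
  proof -
    have u: "unitary_mat (\<rho> (s \<otimes>\<^bsub>G\<^esub> t))" using un SC that by simp
    have "matrix_inv (\<rho> (s \<otimes>\<^bsub>G\<^esub> t)) = cadj (\<rho> (s \<otimes>\<^bsub>G\<^esub> t))"
      using u unfolding unitary_mat_def by (intro matrix_inv_eq) auto
    moreover have "Lv (U s t - mat 1) = trace (mlog (U s t))"
      using Lv_eq[OF order.strict_trans2[OF Ud[OF that]]] assms(7) by simp
    ultimately show ?thesis unfolding omega_def U_def k_def by simp
  qed
  have ca: "a \<in> carrier G" "b \<in> carrier G" "c \<in> carrier G" using SC assms(9-11) by auto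
  have cab: "a \<otimes>\<^bsub>G\<^esub> b \<in> carrier G" "b \<otimes>\<^bsub>G\<^esub> c \<in> carrier G" using ca by auto
  have uni: "unitary_mat (\<rho> g)" if "g \<in> carrier G" for g using un that by simp
  have cw: "cadj (\<rho> g) ** \<rho> g = mat 1" if "g \<in> carrier G" for g
    using uni[OF that] unfolding unitary_mat_def by simp
  have wc: "\<rho> g ** cadj (\<rho> g) = mat 1" if "g \<in> carrier G" for g
    using uni[OF that] unfolding unitary_mat_def by simp
  define u1 where "u1 = U a b"
  define u2 where "u2 = U (a \<otimes>\<^bsub>G\<^esub> b) c"
  define u3 where "u3 = U a (b \<otimes>\<^bsub>G\<^esub> c)"
  define u4 where "u4 = U b c"
  define v where "v = \<rho> a ** u4 ** cadj (\<rho> a)"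
  have assoc: "a \<otimes>\<^bsub>G\<^esub> b \<otimes>\<^bsub>G\<^esub> c = a \<otimes>\<^bsub>G\<^esub> (b \<otimes>\<^bsub>G\<^esub> c)" using ca by (simp add: m_assoc)
  have e12: "u1 ** u2 = \<rho> a ** \<rho> b ** \<rho> c ** cadj (\<rho> (a \<otimes>\<^bsub>G\<^esub> b \<otimes>\<^bsub>G\<^esub> c))"
  proof -
    have "u1 ** u2 = \<rho> a ** \<rho> b ** (cadj (\<rho> (a \<otimes>\<^bsub>G\<^esub> b)) ** \<rho> (a \<otimes>\<^bsub>G\<^esub> b)) ** \<rho> c ** cadj (\<rho> (a \<otimes>\<^bsub>G\<^esub> b \<otimes>\<^bsub>G\<^esub> c))"
      unfolding u1_def u2_def U_def by (simp only: matrix_mul_assoc)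
    then show ?thesis by (simp only: cw[OF cab(1)] matrix_mul_rid)
  qed
  have e34: "v ** u3 = \<rho> a ** \<rho> b ** \<rho> c ** cadj (\<rho> (a \<otimes>\<^bsub>G\<^esub> (b \<otimes>\<^bsub>G\<^esub> c)))"
  proof -
    have "v ** u3 = \<rho> a ** \<rho> b ** \<rho> c ** (cadj (\<rho> (b \<otimes>\<^bsub>G\<^esub> c)) ** ((cadj (\<rho> a) ** \<rho> a) ** \<rho> (b \<otimes>\<^bsub>G\<^esub> c))) ** cadj (\<rho> (a \<otimes>\<^bsub>G\<^esub> (b \<otimes>\<^bsub>G\<^esub> c)))"
      unfolding v_def u3_def u4_def U_def by (simp only: matrix_mul_assoc)
    then show ?thesis by (simp only: cw[OF ca(1)] cw[OF cab(2)] matrix_mul_rid matrix_mul_lid)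
  qed
  have prod: "u1 ** u2 = v ** u3" using e12 e34 assoc by simp
  have d1: "opnorm (u1 - mat 1) < \<delta>" unfolding u1_def using Ud assms(9,10) by blast
  have d2: "opnorm (u2 - mat 1) < \<delta>" unfolding u2_def using Ud assms(12,11) by blast
  have d3: "opnorm (u3 - mat 1) < \<delta>" unfolding u3_def using Ud assms(9,13) by blast
  have d4: "opnorm (u4 - mat 1) < \<delta>" unfolding u4_def using Ud assms(10,11) by blast
  have vconj: "v - mat 1 = \<rho> a ** (u4 - mat 1) ** cadj (\<rho> a)"
    unfolding v_def by (simp add: mm_lsub mm_rsub wc[OF ca(1)])
  have dv: "opnorm (v - mat 1) < \<delta>"
  proof -
    have o1: "opnorm (\<rho> a) \<le> 1" by (rule opnorm_unitary[OF uni[OF ca(1)]])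
    have o2: "opnorm (cadj (\<rho> a)) \<le> 1" by (rule opnorm_unitary[OF unitary_cadj[OF uni[OF ca(1)]]])
    have n4: "0 \<le> opnorm (u4 - mat 1)" by (rule opnorm_ge0)
    have "opnorm (v - mat 1) \<le> opnorm (\<rho> a ** (u4 - mat 1)) * opnorm (cadj (\<rho> a))"
      unfolding vconj by (rule opnorm_mult)
    also have "\<dots> \<le> opnorm (\<rho> a ** (u4 - mat 1))"
      by (rule mult_right_le_one_le[OF opnorm_ge0 opnorm_ge0 o2])
    also have "\<dots> \<le> opnorm (\<rho> a) * opnorm (u4 - mat 1)" by (rule opnorm_mult)
    also have "\<dots> \<le> opnorm (u4 - mat 1)"
      by (rule mult_left_le_one_le[OF n4 opnorm_ge0 o1])
    finally show ?thesis using d4 by simp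
  qed
  have Lv4: "Lv (v - mat 1) = Lv (u4 - mat 1)"
    unfolding vconj by (rule Lv_conj[OF wc[OF ca(1)] cw[OF ca(1)]])
  have key: "Lv ((y - mat 1) + X ** y) = Lv X + Lv (y - mat 1)"
    if X: "opnorm X < \<delta>" and Y: "opnorm (y - mat 1) < \<delta>" and uy: "unitary_mat y" for X y
  proof (rule trlog_mult)
    show "opnorm y \<le> 1" by (rule opnorm_unitary[OF uy])
    show "y = mat 1 + (y - mat 1)" by simp
    show "y ** cadj y = mat 1" using uy unfolding unitary_mat_def by simp
    show "opnorm X + opnorm (y - mat 1) < 1" using X Y assms(7) by simp
  qed
  have sum1: "(y - mat 1) + (X' - mat 1) ** y = X' ** y - mat 1" for X' y :: "complex^'n^'n"
    by (simp add: mm_rsub)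
  have uu2: "unitary_mat u2" unfolding u2_def by (rule Uu[OF cab(1) ca(3)])
  have uu3: "unitary_mat u3" unfolding u3_def by (rule Uu[OF ca(1) cab(2)])
  have "Lv (u1 - mat 1) + Lv (u2 - mat 1) = Lv (u1 ** u2 - mat 1)"
    using key[OF d1 d2 uu2] unfolding sum1 by simp
  also have "\<dots> = Lv (v ** u3 - mat 1)" by (simp only: prod)
  also have "\<dots> = Lv (v - mat 1) + Lv (u3 - mat 1)"
    using key[OF dv d3 uu3] unfolding sum1 by simp
  finally have main: "Lv (u1 - mat 1) + Lv (u2 - mat 1) = Lv (u3 - mat 1) + Lv (u4 - mat 1)"
    using Lv4 by simp
  have "omega G \<rho> a b + omega G \<rho> (a \<otimes>\<^bsub>G\<^esub> b) c = (Lv (u1 - mat 1) + Lv (u2 - mat 1)) / k"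
    unfolding u1_def u2_def om[OF assms(9,10)] om[OF assms(12,11)] by (simp add: add_divide_distrib)
  also have "\<dots> = (Lv (u3 - mat 1) + Lv (u4 - mat 1)) / k" by (simp add: main)
  also have "\<dots> = omega G \<rho> a (b \<otimes>\<^bsub>G\<^esub> c) + omega G \<rho> b c"
    unfolding u3_def u4_def om[OF assms(9,13)] om[OF assms(10,11)] by (simp add: add_divide_distrib)
  finally show ?thesis .
qed


end
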